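(* Let $\Theta=(\theta_k)_{k\ge1}$ be a sequence of positive real numbers such that $g(z)=\sum_{k\ge1}\frac{\theta_k}{k}z^k$ has radius of convergence $r\in(0,\infty)$. Let $(Y_\ell)_{\ell\ge1}$ be independent Poisson random variables, $Y_\ell$ with parameter $\frac{r^\ell\theta_\ell}{\ell}$, let $X_k=\sum_{\ell\mid k}\ell Y_\ell$ and $f(z)=\sum_{k\ge1}\frac{X_k}{k}z^k$. Then for all $z,w\in\mathbb{D}=\{z\in\mathbb{C}:|z|<1\}$, $$\mathrm{Cov}(f(z),f(w))=\sum_{a,b\ge1}\frac{1}{ab}\,g(r z^a\overline{w}^b).$$
   Context: For complex random variables $U,V$, $\mathrm{Cov}(U,V)=\mathbb{E}\big[(U-\mathbb{E}U)\overline{(V-\mathbb{E}V)}\big]$. *)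

theory Defs
  imports "HOL-Analysis.Analysis" "HOL-Probability.Probability"
begin

definition ccov :: "'a measure \<Rightarrow> ('a \<Rightarrow> complex) \<Rightarrow> ('a \<Rightarrow> complex) \<Rightarrow> complex" where
  "ccov M U V = (LINT x|M. (U x - (LINT y|M. U y)) * cnj (V x - (LINT y|M. V y)))"

text \<open>The generating function g(z) = sum_{k>=1} theta_k / k z^k (the k = 0 term vanishes).\<close>
definition gfun :: "(nat \<Rightarrow> real) \<Rightarrow> complex \<Rightarrow> complex" where
  "gfun \<theta> z = (\<Sum>k. complex_of_real (\<theta> k / real k) * z ^ k)"

definition Xvar :: "(nat \<Rightarrow> 'a \<Rightarrow> nat) \<Rightarrow> nat \<Rightarrow> 'a \<Rightarrow> nat" where
  "Xvar Y k x = (\<Sum>l\<in>{l\<in>{1..k}. l dvd k}. l * Y l x)"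

definition fvar :: "(nat \<Rightarrow> 'a \<Rightarrow> nat) \<Rightarrow> complex \<Rightarrow> 'a \<Rightarrow> complex" where
  "fvar Y z x = (\<Sum>k. of_real (real (Xvar Y k x) / real k) * z ^ k)"

end

theory Submission
  imports Defs
begin

lemma poisson_sums:
  fixes a :: real assumes a: "0 < a"
  shows "(\<lambda>k. a ^ k / fact k * exp (-a)) sums 1"
    and "(\<lambda>k. a ^ k / fact k * exp (-a) * real k) sums a"
    and "(\<lambda>k. a ^ k / fact k * exp (-a) * real k ^ 2) sums (a^2 + a)"
proof -
  have e: "(\<lambda>k. a ^ k / fact k) sums exp a"
    using exp_converges[of a] by (simp add: divide_inverse mult.commute)
  show s0: "(\<lambda>k. a ^ k / fact k * exp (-a)) sums 1"
    using sums_mult2[OF e, of "exp (-a)"] by (simp add: exp_minus field_simps)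
  have s1: "(\<lambda>k. a ^ k / fact k * exp (-a) * real k) sums a"
  proof -
    have "(\<lambda>k. a * (a ^ k / fact k * exp (-a))) sums (a * 1)"
      by (rule sums_mult[OF s0])
    moreover have "(\<lambda>k. a ^ Suc k / fact (Suc k) * exp (-a) * real (Suc k)) = (\<lambda>k. a * (a ^ k / fact k * exp (-a)))"
      by (rule ext) (simp add: fact_Suc field_simps del: of_nat_Suc)
    ultimately have "(\<lambda>k. a ^ Suc k / fact (Suc k) * exp (-a) * real (Suc k)) sums a" by simp
    then show ?thesis by (subst (asm) sums_Suc_iff) simp
  qed
  then show "(\<lambda>k. a ^ k / fact k * exp (-a) * real k) sums a" .
  show "(\<lambda>k. a ^ k / fact k * exp (-a) * real k ^ 2) sums (a^2 + a)"
  proof -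
    have "(\<lambda>k. a * (a ^ k / fact k * exp (-a) * real k + a ^ k / fact k * exp (-a))) sums (a * (a + 1))"
      by (rule sums_mult[OF sums_add[OF s1 s0]])
    moreover have "(\<lambda>k. a ^ Suc k / fact (Suc k) * exp (-a) * real (Suc k) ^ 2) = (\<lambda>k. a * (a ^ k / fact k * exp (-a) * real k + a ^ k / fact k * exp (-a)))"
      by (rule ext) (simp add: fact_Suc field_simps power2_eq_square del: of_nat_Suc, simp add: algebra_simps)
    ultimately have "(\<lambda>k. a ^ Suc k / fact (Suc k) * exp (-a) * real (Suc k) ^ 2) sums (a^2+a)"
      by (simp add: power2_eq_square algebra_simps)
    then show ?thesis by (subst (asm) sums_Suc_iff) simp
  qed
qed

lemma pmf_integral_nat:
  fixes p :: "nat pmf" and h :: "nat \<Rightarrow> real"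
  assumes "(\<lambda>k. pmf p k * h k) sums s" "\<And>k. 0 \<le> h k"
  shows "integrable (measure_pmf p) h" "measure_pmf.expectation p h = s"
proof -
  have sm: "summable (\<lambda>k. norm (pmf p k *\<^sub>R h k))"
    using assms by (simp add: sums_iff abs_mult)
  have ic: "integrable (count_space UNIV) (\<lambda>k. pmf p k *\<^sub>R h k)"
    using sm by (simp add: integrable_count_space_nat_iff)
  show "integrable (measure_pmf p) h"
    unfolding measure_pmf_eq_density
    by (subst integrable_density) (use ic in auto)
  have "measure_pmf.expectation p h = integral\<^sup>L (count_space UNIV) (\<lambda>k. pmf p k *\<^sub>R h k)"
    unfolding measure_pmf_eq_density by (subst integral_density) auto
  also have "\<dots> = (\<Sum>k. pmf p k *\<^sub>R h k)" by (rule integral_count_space_nat[OF ic])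
  also have "\<dots> = s" using assms(1) by (simp add: sums_iff)
  finally show "measure_pmf.expectation p h = s" .
qed

lemma poisson_moments:
  fixes a :: real assumes a: "0 < a"
  shows "integrable (measure_pmf (poisson_pmf a)) real"
    "measure_pmf.expectation (poisson_pmf a) real = a"
    "integrable (measure_pmf (poisson_pmf a)) (\<lambda>k. real k ^ 2)"
    "measure_pmf.expectation (poisson_pmf a) (\<lambda>k. real k ^ 2) = a^2 + a"
  using pmf_integral_nat[of "poisson_pmf a" real a] pmf_integral_nat[of "poisson_pmf a" "\<lambda>k. real k ^ 2" "a^2+a"]
    poisson_sums[OF a] a by auto

definition cc :: "nat \<Rightarrow> complex \<Rightarrow> complex" where
  "cc l u = infsum (\<lambda>m. u ^ (l * m) / of_nat m) {1..}"
definition Cn :: "nat \<Rightarrow> real \<Rightarrow> real" where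
  "Cn l \<rho> = infsum (\<lambda>m. \<rho> ^ (l * m) / real m) {1..}"

lemma Cn_props:
  assumes l: "l \<ge> 1" and r0: "0 \<le> \<rho>" and r1: "\<rho> < 1"
  shows "(\<lambda>m. \<rho> ^ (l * m) / real m) summable_on {1..}"
    "0 \<le> Cn l \<rho>" "Cn l \<rho> \<le> \<rho> ^ l / (1 - \<rho>)"
proof -
  have g: "((\<lambda>m. \<rho> ^ (l - 1) * \<rho> ^ m) has_sum (\<rho> ^ (l - 1) * (\<rho> / (1 - \<rho>)))) {1..}"
    by (rule has_sum_cmult_right, rule has_sum_geometric_from_1) (use r0 r1 in auto)
  have le: "\<rho> ^ (l * m) / real m \<le> \<rho> ^ (l - 1) * \<rho> ^ m" if m: "m \<in> {1..}" for m
  proof -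
    have "l - 1 + m \<le> l * m" using l m
      by (cases l; cases m) auto
    then have "\<rho> ^ (l * m) \<le> \<rho> ^ (l - 1 + m)"
      by (rule power_decreasing) (use r0 r1 in auto)
    also have "\<dots> = \<rho> ^ (l - 1) * \<rho> ^ m" by (simp add: power_add)
    finally have a: "\<rho> ^ (l * m) \<le> \<rho> ^ (l - 1) * \<rho> ^ m" .
    have "\<rho> ^ (l * m) / real m \<le> \<rho> ^ (l * m)"
    proof -
      have "\<rho> ^ (l * m) * 1 \<le> \<rho> ^ (l * m) * real m"
        by (rule mult_left_mono) (use m r0 in auto)
      then show ?thesis using m by (simp add: divide_le_eq)
    qed
    with a show ?thesis by linarith
  qed
  show s: "(\<lambda>m. \<rho> ^ (l * m) / real m) summable_on {1..}"
    by (rule summable_on_comparison_test[OF has_sum_imp_summable[OF g]]) (use le r0 in auto)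
  show "0 \<le> Cn l \<rho>" unfolding Cn_def by (rule infsum_nonneg) (use r0 in auto)
  have "Cn l \<rho> \<le> \<rho> ^ (l - 1) * (\<rho> / (1 - \<rho>))"
    unfolding Cn_def using infsum_mono[OF s has_sum_imp_summable[OF g] le] g
    by (simp add: has_sum_iff)
  also have "\<dots> = \<rho> ^ l / (1 - \<rho>)"
    using l by (cases l) auto
  finally show "Cn l \<rho> \<le> \<rho> ^ l / (1 - \<rho>)" .
qed

lemma cc_props:
  assumes l: "l \<ge> 1" and u: "norm u < 1"
  shows "(\<lambda>m. norm (u ^ (l * m) / of_nat m)) summable_on {1..}"
    "((\<lambda>m. u ^ (l * m) / of_nat m) has_sum cc l u) {1..}"
    "norm (cc l u) \<le> Cn l (norm u)"
    "norm (cc l u) \<le> norm u ^ l / (1 - norm u)"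
proof -
  have n: "norm (u ^ (l * m) / of_nat m) = norm u ^ (l * m) / real m" for m
    by (simp add: norm_divide norm_power)
  show a: "(\<lambda>m. norm (u ^ (l * m) / of_nat m)) summable_on {1..}"
    unfolding n using Cn_props[OF l _ u] by simp
  then have "(\<lambda>m. u ^ (l * m) / of_nat m) summable_on {1..}"
    by (rule abs_summable_summable)
  then show "((\<lambda>m. u ^ (l * m) / of_nat m) has_sum cc l u) {1..}"
    unfolding cc_def by (simp add: has_sum_iff)
  have "norm (cc l u) \<le> infsum (\<lambda>m. norm (u ^ (l * m) / of_nat m)) {1..}"
    unfolding cc_def by (rule norm_infsum_bound[OF a])
  also have "\<dots> = Cn l (norm u)" unfolding n Cn_def ..
  finally show c: "norm (cc l u) \<le> Cn l (norm u)" .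
  then show "norm (cc l u) \<le> norm u ^ l / (1 - norm u)"
    using Cn_props(3)[OF l _ u] by simp
qed

lemma has_sum_prod_abs:
  fixes f g :: "_ \<Rightarrow> 'a :: {real_normed_div_algebra, banach}"
  assumes "(f has_sum F) A" "(g has_sum G) B" "(\<lambda>x. norm (f x)) summable_on A" "(\<lambda>x. norm (g x)) summable_on B"
  shows "((\<lambda>(a, b). f a * g b) has_sum (F * G)) (A \<times> B)"
    "(\<lambda>(a, b). norm (f a * g b)) summable_on (A \<times> B)"
proof -
  have in1: "((\<lambda>b. norm (f a) * norm (g b)) has_sum (norm (f a) * infsum (\<lambda>b. norm (g b)) B)) B" for a
    by (rule has_sum_cmult_right) (use assms(4) in \<open>simp add: has_sum_iff\<close>)
  have out1: "(\<lambda>a. norm (f a) * infsum (\<lambda>b. norm (g b)) B) summable_on A"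
    by (rule summable_on_cmult_left[OF assms(3)])
  have "(\<lambda>p. norm (f (fst p)) * norm (g (snd p))) summable_on Sigma A (\<lambda>_. B)"
    by (rule summable_on_SigmaI[where g = "\<lambda>a. norm (f a) * infsum (\<lambda>b. norm (g b)) B"])
       (use in1 out1 in auto)
  then show ab: "(\<lambda>(a, b). norm (f a * g b)) summable_on (A \<times> B)"
    by (simp add: case_prod_unfold norm_mult)
  show "((\<lambda>(a, b). f a * g b) has_sum (F * G)) (A \<times> B)"
  proof (rule has_sum_SigmaI[where g = "\<lambda>a. f a * G"])
    show "((\<lambda>b. (\<lambda>(a, b). f a * g b) (a, b)) has_sum f a * G) B" if "a \<in> A" for a
      using has_sum_cmult_right[OF assms(2)] by simp
    show "((\<lambda>a. f a * G) has_sum F * G) A" by (rule has_sum_cmult_left[OF assms(1)])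
    show "(\<lambda>(a, b). f a * g b) summable_on A \<times> B" using abs_summable_summable[of "\<lambda>(a,b). f a * g b" "A \<times> B"] ab by (simp add: case_prod_unfold)
  qed
qed

lemma summable_on_from_summable_real:
  fixes f :: "nat \<Rightarrow> real"
  assumes "summable f" "\<And>n. 0 \<le> f n"
  shows "f summable_on A"
  using summable_on_subset_banach[OF summable_nonneg_imp_summable_on[OF assms]] by simp

lemma has_sum_from1_imp_sums:
  fixes f :: "nat \<Rightarrow> 'a :: {topological_comm_monoid_add, t2_space}"
  assumes "(f has_sum S) {1..}" "f 0 = 0"
  shows "f sums S"
proof -
  have "(f has_sum S) UNIV"
    using assms by (subst has_sum_cong_neutral[where T = "{1..}" and g = f]) (auto simp: not_le)
  then show ?thesis by (rule has_sum_imp_sums)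
qed

lemma div_cancel_ge1: "0 < (x::nat) \<Longrightarrow> x * y div x = y"
  by simp

lemma fvar_rearrange:
  fixes y :: "nat \<Rightarrow> nat" and z :: complex
  assumes z: "norm z < 1" and y0: "y 0 = 0"
    and sy: "summable (\<lambda>l. real (y l) * norm z ^ l)"
  shows "(\<lambda>k. of_real (real (\<Sum>l\<in>{l\<in>{1..k}. l dvd k}. l * y l) / real k) * z ^ k)
            sums (\<Sum>l. of_real (real (y l)) * cc l z)"
proof -
  define \<rho> where "\<rho> = norm z"
  have r0: "0 \<le> \<rho>" and r1: "\<rho> < 1" using z by (auto simp: \<rho>_def)
  define t where "t = (\<lambda>(l, m). of_real (real (y l)) * (z ^ (l * m) / of_nat m) :: complex)"
  have inner: "((\<lambda>m. t (l, m)) has_sum (of_real (real (y l)) * cc l z)) {1..}" if "l \<in> {1..}" for l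
    unfolding t_def using has_sum_cmult_right[OF cc_props(2)[of l z]] that z by auto
  have nt: "norm (t (l, m)) = real (y l) * (\<rho> ^ (l * m) / real m)" for l m
    by (simp add: t_def \<rho>_def norm_mult norm_divide norm_power)
  have innern: "((\<lambda>m. norm (t (l, m))) has_sum (real (y l) * Cn l \<rho>)) {1..}" if "l \<in> {1..}" for l
    unfolding nt Cn_def
    by (rule has_sum_cmult_right) (use Cn_props(1)[of l \<rho>] that r0 r1 in \<open>auto simp: has_sum_iff\<close>)
  have outer: "(\<lambda>l. real (y l) * Cn l \<rho>) summable_on {1..}"
  proof (rule summable_on_comparison_test)
    show "(\<lambda>l. real (y l) * \<rho> ^ l / (1 - \<rho>)) summable_on {1..}"
      by (rule summable_on_from_summable_real)
         (use summable_divide[OF sy, of "1 - \<rho>"] r0 r1 in \<open>auto simp: \<rho>_def\<close>)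
    show "real (y l) * Cn l \<rho> \<le> real (y l) * \<rho> ^ l / (1 - \<rho>)" if "l \<in> {1..}" for l
      using mult_left_mono[OF Cn_props(3)[of l \<rho>], of "real (y l)"] that r0 r1 by auto
    show "0 \<le> real (y l) * Cn l \<rho>" if "l \<in> {1..}" for l
      using Cn_props(2)[of l \<rho>] that r0 r1 by auto
  qed
  have "(\<lambda>p. norm (t p)) summable_on Sigma {1..} (\<lambda>_. {1..})"
    by (rule summable_on_SigmaI[OF innern outer]) auto
  then have "t summable_on {1..} \<times> {1..}"
    by (simp add: summable_on_iff_abs_summable_on_complex)
  then obtain T where T: "(t has_sum T) ({1..} \<times> {1..})"
    by (auto simp: summable_on_def)
  have "((\<lambda>l. of_real (real (y l)) * cc l z) has_sum T) {1..}"
    by (rule has_sum_SigmaD[OF T inner]) auto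
  then have "(\<lambda>l. of_real (real (y l)) * cc l z) sums T"
    by (rule has_sum_from1_imp_sums) (simp add: y0)
  then have Teq: "(\<Sum>l. of_real (real (y l)) * cc l z) = T" by (simp add: sums_iff)
  define D where "D k = {l\<in>{1..k}. l dvd k}" for k :: nat
  define h where "h = (\<lambda>(k, l). of_real (real (y l)) * (z ^ k / of_nat (k div l)) :: complex)"
  have "(t has_sum T) ({1..} \<times> {1..}) = (h has_sum T) (Sigma {1..} D)"
  proof (rule has_sum_reindex_bij_witness[where i = "\<lambda>(k, l). (l, k div l)" and j = "\<lambda>(l, m). (l * m, l)"])
    show "(\<lambda>(k, l). (l, k div l)) ((\<lambda>(l, m). (l * m, l)) a) = a" if "a \<in> {1..} \<times> {1::nat..}" for a :: "nat \<times> nat"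
      using that by (auto simp: div_cancel_ge1)
    show "(\<lambda>(l, m). (l * m, l)) a \<in> Sigma {1..} D" if "a \<in> {1..} \<times> {1::nat..}" for a :: "nat \<times> nat"
      using that by (auto simp: D_def)
    show "(\<lambda>(l, m). (l * m, l)) ((\<lambda>(k, l). (l, k div l)) b) = b" if "b \<in> Sigma {1..} D" for b :: "nat \<times> nat"
      using that by (auto simp: D_def)
    show "(\<lambda>(k, l). (l, k div l)) b \<in> {1..} \<times> {1..}" if "b \<in> Sigma {1..} D" for b :: "nat \<times> nat"
      using that by (auto simp: D_def elim!: dvdE)
    show "h ((\<lambda>(l, m). (l * m, l)) a) = t a" if "a \<in> {1..} \<times> {1::nat..}" for a :: "nat \<times> nat"
      using that by (auto simp: h_def t_def div_cancel_ge1)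
  qed simp
  with T have H: "(h has_sum T) (Sigma {1..} D)" by simp
  have "((\<lambda>k. \<Sum>l\<in>D k. h (k, l)) has_sum T) {1..}"
    by (rule has_sum_SigmaD[OF H]) (auto simp: D_def)
  moreover have "(\<Sum>l\<in>D k. h (k, l)) = of_real (real (\<Sum>l\<in>D k. l * y l) / real k) * z ^ k"
    if "k \<in> {1..}" for k
  proof -
    have "(\<Sum>l\<in>D k. h (k, l)) = (\<Sum>l\<in>D k. of_real (real (l * y l) / real k) * z ^ k)"
    proof (rule sum.cong[OF refl])
      fix l assume l: "l \<in> D k"
      then obtain q where q: "k = l * q" by (auto simp: D_def elim!: dvdE)
      have "l \<ge> 1" "q \<ge> 1" using l that q by (auto simp: D_def)
      then show "h (k, l) = of_real (real (l * y l) / real k) * z ^ k"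
        by (simp add: h_def q field_simps)
    qed
    also have "\<dots> = of_real (real (\<Sum>l\<in>D k. l * y l) / real k) * z ^ k"
      by (simp add: sum_distrib_right sum_divide_distrib)
    finally show ?thesis .
  qed
  ultimately have "((\<lambda>k. of_real (real (\<Sum>l\<in>D k. l * y l) / real k) * z ^ k) has_sum T) {1..}"
    by (subst has_sum_cong[symmetric]) auto
  then have "(\<lambda>k. of_real (real (\<Sum>l\<in>D k. l * y l) / real k) * z ^ k) sums T"
    by (rule has_sum_from1_imp_sums) simp
  then show ?thesis unfolding Teq D_def .
qed

lemma AE_summable_nonneg:
  fixes f :: "nat \<Rightarrow> 'a \<Rightarrow> real"
  assumes int: "\<And>i. integrable M (f i)" and nn: "\<And>i x. 0 \<le> f i x"
    and s: "summable (\<lambda>i. integral\<^sup>L M (f i))"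
  shows "AE x in M. summable (\<lambda>i. f i x)"
proof -
  have [measurable]: "\<And>i. f i \<in> borel_measurable M" using int by auto
  have "(\<integral>\<^sup>+ x. (\<Sum>i. ennreal (f i x)) \<partial>M) = (\<Sum>i. \<integral>\<^sup>+ x. ennreal (f i x) \<partial>M)"
    by (rule nn_integral_suminf) auto
  also have "\<dots> = (\<Sum>i. ennreal (integral\<^sup>L M (f i)))"
    by (intro suminf_cong nn_integral_eq_integral int) (auto simp: nn)
  also have "\<dots> = ennreal (\<Sum>i. integral\<^sup>L M (f i))"
    by (rule suminf_ennreal2) (use s nn in \<open>auto intro: integral_nonneg_AE\<close>)
  finally have "(\<integral>\<^sup>+ x. (\<Sum>i. ennreal (f i x)) \<partial>M) \<noteq> \<infinity>" by simp
  then have "AE x in M. (\<Sum>i. ennreal (f i x)) \<noteq> \<infinity>"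
    by (intro nn_integral_noteq_infinite) auto
  then show ?thesis
    by eventually_elim (rule summable_suminf_not_top, use nn in auto)
qed

lemma integral_suminf_bound:
  fixes f :: "nat \<Rightarrow> 'a \<Rightarrow> 'b :: {banach, second_countable_topology}"
  assumes int: "\<And>i. integrable M (f i)"
    and s1: "AE x in M. summable (\<lambda>i. norm (f i x))"
    and s2: "summable (\<lambda>i. \<integral>x. norm (f i x) \<partial>M)"
  shows "integrable M (\<lambda>x. \<Sum>i. f i x)"
    "(\<integral>x. (\<Sum>i. f i x) \<partial>M) = (\<Sum>i. integral\<^sup>L M (f i))"
    "(\<integral>x. norm (\<Sum>i. f i x) \<partial>M) \<le> (\<Sum>i. \<integral>x. norm (f i x) \<partial>M)"
proof -
  show i1: "integrable M (\<lambda>x. \<Sum>i. f i x)" by (rule integrable_suminf[OF int s1 s2])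
  show "(\<integral>x. (\<Sum>i. f i x) \<partial>M) = (\<Sum>i. integral\<^sup>L M (f i))" by (rule integral_suminf[OF int s1 s2])
  have int': "\<And>i. integrable M (\<lambda>x. norm (f i x))" using int by auto
  have s1': "AE x in M. summable (\<lambda>i. norm (norm (f i x)))" using s1 by simp
  have s2': "summable (\<lambda>i. \<integral>x. norm (norm (f i x)) \<partial>M)" using s2 by simp
  have "(\<integral>x. norm (\<Sum>i. f i x) \<partial>M) \<le> (\<integral>x. (\<Sum>i. norm (f i x)) \<partial>M)"
    by (rule integral_mono_AE[OF integrable_norm[OF i1] integrable_suminf[OF int' s1' s2']])
       (use s1 in \<open>auto elim!: eventually_mono intro: summable_norm\<close>)
  also have "\<dots> = (\<Sum>i. \<integral>x. norm (f i x) \<partial>M)" by (rule integral_suminf[OF int' s1' s2'])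
  finally show "(\<integral>x. norm (\<Sum>i. f i x) \<partial>M) \<le> (\<Sum>i. \<integral>x. norm (f i x) \<partial>M)" .
qed

locale setting =
  fixes M :: "'a measure" and \<theta> :: "nat \<Rightarrow> real" and r :: real and Y :: "nat \<Rightarrow> 'a \<Rightarrow> nat"
  assumes ps: "prob_space M"
    and \<theta>pos: "\<And>k. k \<ge> 1 \<Longrightarrow> \<theta> k > 0"
    and rpos: "0 < r"
    and cr: "conv_radius (\<lambda>k. \<theta> k / real k) = ereal r"
    and ind: "prob_space.indep_vars M (\<lambda>_. count_space UNIV) Y {1..}"
    and dist: "\<And>l. l \<ge> 1 \<Longrightarrow>
           distr M (count_space UNIV) (Y l) = measure_pmf (poisson_pmf (r ^ l * \<theta> l / real l))"
begin

sublocale prob_space M by (rule ps)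

definition lam :: "nat \<Rightarrow> real" where "lam l = r ^ l * \<theta> l / real l"
definition Z :: "nat \<Rightarrow> 'a \<Rightarrow> real" where "Z l x = (if l = 0 then 0 else real (Y l x))"

lemma lam0[simp]: "lam 0 = 0" by (simp add: lam_def)
lemma lam_pos: "l \<ge> 1 \<Longrightarrow> lam l > 0" using \<theta>pos rpos by (simp add: lam_def)
lemma lam_nn: "lam l \<ge> 0" using lam_pos[of l] by (cases l) auto
lemma Z_nn: "Z l x \<ge> 0" by (simp add: Z_def)

lemma Y_meas: "l \<ge> 1 \<Longrightarrow> Y l \<in> measurable M (count_space UNIV)"
  using ind by (auto simp: indep_vars_def)

lemma Z_meas[measurable]: "Z l \<in> borel_measurable M"
proof (cases "l = 0")
  case False
  have "(\<lambda>x. real (Y l x)) \<in> borel_measurable M"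
    using measurable_comp[OF Y_meas[of l], of real borel] False by (auto simp: comp_def)
  then show ?thesis using False by (simp add: Z_def[abs_def])
qed (simp add: Z_def[abs_def])

lemma Z_moments1:
  "integrable M (\<lambda>x. Z l x)" "(\<integral>x. Z l x \<partial>M) = lam l"
  "integrable M (\<lambda>x. Z l x ^ 2)" "(\<integral>x. Z l x ^ 2 \<partial>M) = lam l ^ 2 + lam l"
proof -
  have all: "integrable M (\<lambda>x. Z l x) \<and> (\<integral>x. Z l x \<partial>M) = lam l \<and>
    integrable M (\<lambda>x. Z l x ^ 2) \<and> (\<integral>x. Z l x ^ 2 \<partial>M) = lam l ^ 2 + lam l"
  proof (cases "l = 0")
    case True then show ?thesis by (simp add: Z_def)
  next
    case False
    then have l: "l \<ge> 1" by simp
    have Ym: "Y l \<in> measurable M (count_space UNIV)" by (rule Y_meas[OF l])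
    have d: "distr M (count_space UNIV) (Y l) = measure_pmf (poisson_pmf (lam l))"
      using dist[OF l] by (simp add: lam_def)
    note pm = poisson_moments[OF lam_pos[OF l]]
    have Zeq: "Z l = (\<lambda>x. real (Y l x))" using False by (simp add: Z_def[abs_def])
    have i1: "integrable M (\<lambda>x. real (Y l x))"
      using pm(1) integrable_distr_eq[OF Ym, of real] d by simp
    have e1: "(\<integral>x. real (Y l x) \<partial>M) = lam l"
      using pm(2) integral_distr[OF Ym, of real] d by simp
    have i2: "integrable M (\<lambda>x. real (Y l x) ^ 2)"
      using pm(3) integrable_distr_eq[OF Ym, of "\<lambda>k. real k ^ 2"] d by simp
    have e2: "(\<integral>x. real (Y l x) ^ 2 \<partial>M) = lam l ^ 2 + lam l"
      using pm(4) integral_distr[OF Ym, of "\<lambda>k. real k ^ 2"] d by simp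
    show ?thesis unfolding Zeq using i1 e1 i2 e2 by simp
  qed
  then show "integrable M (\<lambda>x. Z l x)" "(\<integral>x. Z l x \<partial>M) = lam l"
    "integrable M (\<lambda>x. Z l x ^ 2)" "(\<integral>x. Z l x ^ 2 \<partial>M) = lam l ^ 2 + lam l" by auto
qed

lemma Z_moments2:
  "integrable M (\<lambda>x. Z l x * Z m x)"
  "(\<integral>x. Z l x * Z m x \<partial>M) = lam l * lam m + (if l = m then lam l else 0)"
proof -
  have "integrable M (\<lambda>x. Z l x * Z m x) \<and>
    (\<integral>x. Z l x * Z m x \<partial>M) = lam l * lam m + (if l = m then lam l else 0)"
  proof (cases "l = m")
    case True then show ?thesis using Z_moments1[of l] by (simp add: power2_eq_square)
  next
    case ne: False
    show ?thesis
    proof (cases "l = 0 \<or> m = 0")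
      case True then show ?thesis by (auto simp: Z_def)
    next
      case False
      then have lm: "{l, m} \<subseteq> {1..}" by auto
      have "indep_vars (\<lambda>_. count_space UNIV) Y {l, m}"
        by (rule indep_vars_subset[OF ind lm])
      then have iv: "indep_vars (\<lambda>_. borel) (\<lambda>i x. real (Y i x)) {l, m}"
        by (rule indep_vars_compose2) auto
      have iv': "indep_vars (\<lambda>_. borel) Z {l, m}"
        using iv by (rule indep_vars_cong[THEN iffD1, rotated -1]) (use False in \<open>auto simp: Z_def[abs_def]\<close>)
      have ii: "\<And>i. i \<in> {l, m} \<Longrightarrow> integrable M (Z i)"
        using Z_moments1(1) by auto
      have p: "(\<lambda>x. \<Prod>i\<in>{l, m}. Z i x) = (\<lambda>x. Z l x * Z m x)" using ne by auto
      show ?thesis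
        using indep_vars_lebesgue_integral[OF _ iv' ii] indep_vars_integrable[OF _ iv' ii]
          Z_moments1(2)[of l] Z_moments1(2)[of m] ne unfolding p by simp
    qed
  qed
  then show "integrable M (\<lambda>x. Z l x * Z m x)"
    "(\<integral>x. Z l x * Z m x \<partial>M) = lam l * lam m + (if l = m then lam l else 0)" by auto
qed

lemma lam_summable:
  assumes "0 \<le> \<rho>" "\<rho> < 1"
  shows "summable (\<lambda>l. lam l * \<rho> ^ l)"
proof -
  have "ereal (norm (r * \<rho>)) < conv_radius (\<lambda>k. \<theta> k / real k)"
    using assms rpos cr by (simp add: abs_mult mult_less_cancel_left1)
  from abs_summable_in_conv_radius[OF this]
  have "summable (\<lambda>n. norm (\<theta> n / real n * (r * \<rho>) ^ n))" .
  moreover have "norm (\<theta> n / real n * (r * \<rho>) ^ n) = lam n * \<rho> ^ n" for n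
  proof (cases "n = 0")
    case False
    then show ?thesis using \<theta>pos[of n] rpos assms
      by (simp add: lam_def abs_mult power_mult_distrib)
  qed (simp add: lam_def)
  ultimately show ?thesis by simp
qed

lemma AE_Z_summable:
  assumes "0 \<le> \<rho>" "\<rho> < 1"
  shows "AE x in M. summable (\<lambda>l. Z l x * \<rho> ^ l)"
proof (rule AE_summable_nonneg)
  show "integrable M (\<lambda>x. Z i x * \<rho> ^ i)" for i using Z_moments1(1)[of i] by simp
  show "0 \<le> Z i x * \<rho> ^ i" for i x using Z_nn assms by simp
  show "summable (\<lambda>i. \<integral>x. Z i x * \<rho> ^ i \<partial>M)"
    using lam_summable[OF assms] by (simp add: Z_moments1(2))
qed

end

context setting begin

definition cf :: "complex \<Rightarrow> nat \<Rightarrow> complex" where "cf u l = (if l = 0 then 0 else cc l u)"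
definition az :: "complex \<Rightarrow> nat \<Rightarrow> real" where "az u l = norm u ^ l / (1 - norm u)"

lemma az_nn: "norm u < 1 \<Longrightarrow> 0 \<le> az u l" by (simp add: az_def)

lemma cf_bound: "norm u < 1 \<Longrightarrow> norm (cf u l) \<le> az u l"
  using cc_props(4)[of l u] by (cases "l = 0") (auto simp: cf_def az_def)

lemma lam_az_summable: "norm u < 1 \<Longrightarrow> summable (\<lambda>l. lam l * az u l)"
  using summable_divide[OF lam_summable[of "norm u"], of "1 - norm u"]
  by (simp add: az_def)

lemma Z_az_summable: "norm u < 1 \<Longrightarrow> summable (\<lambda>l. Z l x * norm u ^ l) \<Longrightarrow> summable (\<lambda>l. Z l x * az u l)"
  using summable_divide[of "\<lambda>l. Z l x * norm u ^ l" "1 - norm u"]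
  by (simp add: az_def)

lemma Xvar_real: "real (Xvar Y k x) = (\<Sum>l\<in>{l\<in>{1..k}. l dvd k}. real l * Z l x)"
  unfolding Xvar_def by (simp add: Z_def)

lemma fvar_meas[measurable]: "fvar Y z \<in> borel_measurable M"
proof -
  have "(\<lambda>x. real (Xvar Y k x)) \<in> borel_measurable M" for k
    unfolding Xvar_real by measurable
  then have "(\<lambda>x. complex_of_real (real (Xvar Y k x) / real k) * z ^ k) \<in> borel_measurable M" for k
    by measurable
  then show ?thesis unfolding fvar_def[abs_def] by measurable
qed

lemma fvar_ae:
  assumes z: "norm z < 1"
  shows "AE x in M. summable (\<lambda>l. Z l x * norm z ^ l) \<and> fvar Y z x = (\<Sum>l. of_real (Z l x) * cf z l)"
proof -
  have "AE x in M. summable (\<lambda>l. Z l x * norm z ^ l)" using AE_Z_summable[of "norm z"] z by simp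
  then show ?thesis
  proof (rule eventually_mono)
  fix x assume s: "summable (\<lambda>l. Z l x * norm z ^ l)"
  show "summable (\<lambda>l. Z l x * norm z ^ l) \<and> fvar Y z x = (\<Sum>l. of_real (Z l x) * cf z l)"
  proof
  show "summable (\<lambda>l. Z l x * norm z ^ l)" by fact
  define y where "y l = (if l = 0 then 0 else Y l x)" for l
  have sy: "summable (\<lambda>l. real (y l) * norm z ^ l)"
    using s by (simp add: y_def Z_def if_distrib cong: if_cong)
  have F1: "(\<lambda>k. of_real (real (\<Sum>l\<in>{l\<in>{1..k}. l dvd k}. l * y l) / real k) * z ^ k)
            sums (\<Sum>l. of_real (real (y l)) * cc l z)"
    by (rule fvar_rearrange[OF z _ sy]) (simp add: y_def)
  have E2: "(\<Sum>l\<in>{l\<in>{1..k}. l dvd k}. l * y l) = Xvar Y k x" for k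
    unfolding Xvar_def by (rule sum.cong) (auto simp: y_def)
  have E3: "of_real (real (y l)) * cc l z = of_real (Z l x) * cf z l" for l
    by (simp add: y_def Z_def cf_def)
  have "(\<lambda>k. of_real (real (Xvar Y k x) / real k) * z ^ k) sums (\<Sum>l. of_real (Z l x) * cf z l)"
    using F1 unfolding E2 E3 .
  then show "fvar Y z x = (\<Sum>l. of_real (Z l x) * cf z l)"
    unfolding fvar_def by (simp add: sums_iff)
  qed
  qed
qed

lemma Zc_summable:
  assumes z: "norm z < 1" and s: "summable (\<lambda>l. Z l x * norm z ^ l)"
  shows "summable (\<lambda>l. norm (of_real (Z l x) * cf z l))"
proof (rule summable_comparison_test'[OF Z_az_summable[OF z s]])
  fix l
  show "norm (norm (of_real (Z l x) * cf z l)) \<le> Z l x * az z l"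
    using cf_bound[OF z, of l] Z_nn[of l x] by (simp add: norm_mult mult_left_mono)
qed

lemma lamc_summable:
  assumes z: "norm z < 1"
  shows "summable (\<lambda>l. norm (of_real (lam l) * cf z l))"
proof (rule summable_comparison_test'[OF lam_az_summable[OF z]])
  fix l
  show "norm (norm (of_real (lam l) * cf z l)) \<le> lam l * az z l"
    using cf_bound[OF z, of l] lam_nn[of l] by (simp add: norm_mult mult_left_mono)
qed

lemma fvar_expect:
  assumes z: "norm z < 1"
  shows "integrable M (fvar Y z)" "integral\<^sup>L M (fvar Y z) = (\<Sum>l. of_real (lam l) * cf z l)"
proof -
  define f where "f l x = of_real (Z l x) * cf z l" for l x
  have int: "integrable M (f l)" for l
    unfolding f_def[abs_def] using Z_moments1(1)[of l] by auto
  have s1: "AE x in M. summable (\<lambda>l. norm (f l x))"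
    using fvar_ae[OF z] by eventually_elim (use Zc_summable[OF z] in \<open>auto simp: f_def\<close>)
  have nf: "(\<integral>x. norm (f l x) \<partial>M) = lam l * norm (cf z l)" for l
    using Z_moments1(2)[of l] Z_nn by (simp add: f_def norm_mult)
  have s2: "summable (\<lambda>l. \<integral>x. norm (f l x) \<partial>M)"
    unfolding nf using lamc_summable[OF z] by (simp add: norm_mult lam_nn)
  have ae: "AE x in M. fvar Y z x = (\<Sum>l. f l x)"
    using fvar_ae[OF z] by eventually_elim (simp add: f_def)
  have m2: "(\<lambda>x. \<Sum>l. f l x) \<in> borel_measurable M"
    unfolding f_def by measurable
  show "integrable M (fvar Y z)"
    using integrable_cong_AE[OF fvar_meas m2 ae] integral_suminf_bound(1)[OF int s1 s2] by simp
  have "integral\<^sup>L M (fvar Y z) = (\<integral>x. (\<Sum>l. f l x) \<partial>M)"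
    by (rule integral_cong_AE[OF fvar_meas m2 ae])
  also have "\<dots> = (\<Sum>l. integral\<^sup>L M (f l))" by (rule integral_suminf_bound(2)[OF int s1 s2])
  also have "\<dots> = (\<Sum>l. of_real (lam l) * cf z l)"
    by (simp add: f_def[abs_def] Z_moments1(2))
  finally show "integral\<^sup>L M (fvar Y z) = (\<Sum>l. of_real (lam l) * cf z l)" .
qed

end

context setting begin

lemma Zc_prod:
  "integrable M (\<lambda>x. (Z l x - lam l) * (Z m x - lam m))"
  "(\<integral>x. (Z l x - lam l) * (Z m x - lam m) \<partial>M) = (if l = m then lam l else 0)"
  "integrable M (\<lambda>x. (Z l x + lam l) * (Z m x + lam m))"
  "(\<integral>x. (Z l x + lam l) * (Z m x + lam m) \<partial>M) = 4 * lam l * lam m + (if l = m then lam l else 0)"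
proof -
  have eq1: "(\<lambda>x. (Z l x - lam l) * (Z m x - lam m)) =
     (\<lambda>x. (Z l x * Z m x - lam m * Z l x) - lam l * Z m x + lam l * lam m)"
    by (rule ext) (simp add: algebra_simps)
  have eq2: "(\<lambda>x. (Z l x + lam l) * (Z m x + lam m)) =
     (\<lambda>x. (Z l x * Z m x + lam m * Z l x) + lam l * Z m x + lam l * lam m)"
    by (rule ext) (simp add: algebra_simps)
  note i = Z_moments2(1)[of l m] Z_moments1(1)[of l] Z_moments1(1)[of m]
  show "integrable M (\<lambda>x. (Z l x - lam l) * (Z m x - lam m))"
    unfolding eq1 using i by auto
  show "integrable M (\<lambda>x. (Z l x + lam l) * (Z m x + lam m))"
    unfolding eq2 using i by auto
  show "(\<integral>x. (Z l x - lam l) * (Z m x - lam m) \<partial>M) = (if l = m then lam l else 0)"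
    unfolding eq1 using i by (simp add: Z_moments2(2) Z_moments1(2) prob_space)
  show "(\<integral>x. (Z l x + lam l) * (Z m x + lam m) \<partial>M) = 4 * lam l * lam m + (if l = m then lam l else 0)"
    unfolding eq2 using i by (simp add: Z_moments2(2) Z_moments1(2) prob_space)
qed

end

lemma cnj_meas[measurable]: "(cnj :: complex \<Rightarrow> complex) \<in> borel_measurable borel"
  by (rule borel_measurable_continuous_onI) (intro continuous_intros)

lemma cnj_meas'[measurable (raw)]: "f \<in> borel_measurable M \<Longrightarrow> (\<lambda>x. cnj (f x :: complex)) \<in> borel_measurable M"
  using measurable_compose[OF _ cnj_meas] by blast

context setting begin

lemma az_le: "norm u < 1 \<Longrightarrow> az u l \<le> 1 / (1 - norm u)"
  unfolding az_def by (rule divide_right_mono) (auto intro: power_le_one)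

lemma cov_main:
  assumes z: "norm z < 1" and w: "norm w < 1"
  shows "ccov M (fvar Y z) (fvar Y w) = (\<Sum>l. of_real (lam l) * cf z l * cnj (cf w l))"
proof -
  define Ez where "Ez = (\<Sum>l. of_real (lam l) * cf z l)"
  define Ew where "Ew = (\<Sum>l. of_real (lam l) * cf w l)"
  define A where "A l x = of_real (Z l x - lam l) * cf z l" for l x
  define B where "B l x = of_real (Z l x - lam l) * cf w l" for l x
  define V where "V x = (\<Sum>m. B m x)" for x
  define f where "f l m x = A l x * cnj (B m x)" for l m x
  define G where "G l x = (\<Sum>m. f l m x)" for l x
  define T where "T l = of_real (lam l) * cf z l * cnj (cf w l)" for l
  define Sw where "Sw = (\<Sum>m. lam m * az w m)"
  define \<beta> where "\<beta> l m = 4 * lam l * az z l * (lam m * az w m) + (if m = l then lam l * az z l * az w l else 0)" for l m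
  define \<gamma> where "\<gamma> l = 4 * lam l * az z l * Sw + lam l * az z l * az w l" for l

  have [measurable]: "A l \<in> borel_measurable M" "B l \<in> borel_measurable M" for l
    unfolding A_def[abs_def] B_def[abs_def] by measurable
  have [measurable]: "f l m \<in> borel_measurable M" for l m
    unfolding f_def[abs_def] by measurable
  have [measurable]: "G l \<in> borel_measurable M" for l
    unfolding G_def[abs_def] by measurable

  have fl: "f l m x = of_real ((Z l x - lam l) * (Z m x - lam m)) * (cf z l * cnj (cf w m))" for l m x
    by (simp add: f_def A_def B_def)
  have fl': "f l m = (\<lambda>x. of_real ((Z l x - lam l) * (Z m x - lam m)) * (cf z l * cnj (cf w m)))" for l m
    by (rule ext) (rule fl)
  have intf: "integrable M (f l m)" for l m
    unfolding fl' by (rule integrable_mult_left, rule integrable_of_real[OF Zc_prod(1)])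
  have Ef: "integral\<^sup>L M (f l m) = (if m = l then T l else 0)" for l m
    unfolding fl' by (simp only: integral_mult_left_zero integral_complex_of_real Zc_prod(2)) (auto simp: T_def)

  have nfb: "(\<integral>x. norm (f l m x) \<partial>M) \<le> \<beta> l m" for l m
  proof -
    have "(\<integral>x. norm (f l m x) \<partial>M) \<le> (\<integral>x. (Z l x + lam l) * (Z m x + lam m) * (az z l * az w m) \<partial>M)"
    proof (rule integral_mono)
      show "integrable M (\<lambda>x. norm (f l m x))" using intf by auto
      show "integrable M (\<lambda>x. (Z l x + lam l) * (Z m x + lam m) * (az z l * az w m))"
        using Zc_prod(3)[of l m] by auto
      fix x
      have a1: "\<bar>Z l x - lam l\<bar> \<le> Z l x + lam l" using Z_nn[of l x] lam_nn[of l] by linarith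
      have a2: "\<bar>Z m x - lam m\<bar> \<le> Z m x + lam m" using Z_nn[of m x] lam_nn[of m] by linarith
      have "\<bar>(Z l x - lam l) * (Z m x - lam m)\<bar> \<le> (Z l x + lam l) * (Z m x + lam m)"
        unfolding abs_mult by (rule mult_mono[OF a1 a2]) (use Z_nn[of l x] lam_nn[of l] in auto)
      moreover have "norm (cf z l * cnj (cf w m)) \<le> az z l * az w m"
        unfolding norm_mult complex_mod_cnj
        by (rule mult_mono[OF cf_bound[OF z] cf_bound[OF w]]) (auto intro: az_nn[OF z])
      ultimately show "norm (f l m x) \<le> (Z l x + lam l) * (Z m x + lam m) * (az z l * az w m)"
        unfolding fl norm_mult norm_of_real
        by (rule mult_mono) (auto intro!: mult_nonneg_nonneg Z_nn lam_nn add_nonneg_nonneg)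
    qed
    also have "\<dots> = (4 * lam l * lam m + (if l = m then lam l else 0)) * (az z l * az w m)"
      using Zc_prod(3,4)[of l m] by simp
    also have "\<dots> = \<beta> l m" by (auto simp: \<beta>_def algebra_simps)
    finally show ?thesis .
  qed

  have sSw: "summable (\<lambda>m. lam m * az w m)" by (rule lam_az_summable[OF w])
  have sbeta: "(\<lambda>m. \<beta> l m) sums \<gamma> l" for l
  proof -
    have "(\<lambda>m. 4 * lam l * az z l * (lam m * az w m)) sums (4 * lam l * az z l * Sw)"
      unfolding Sw_def by (rule sums_mult[OF summable_sums[OF sSw]])
    from sums_add[OF this sums_single[of l "\<lambda>_. lam l * az z l * az w l"]]
    show ?thesis by (simp add: \<beta>_def \<gamma>_def)
  qed
  have sgamma: "summable \<gamma>"
  proof (rule summable_comparison_test')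
    show "summable (\<lambda>l. (lam l * az z l) * (4 * Sw + 1 / (1 - norm w)))"
      by (rule summable_mult2[OF lam_az_summable[OF z]])
    fix l
    have "0 \<le> lam l * az z l" using lam_nn az_nn[OF z] by simp
    moreover have "0 \<le> Sw" unfolding Sw_def using lam_nn az_nn[OF w] by (intro suminf_nonneg sSw) simp
    ultimately have "0 \<le> \<gamma> l" using az_nn[OF w, of l] unfolding \<gamma>_def by (metis (no_types) add_nonneg_nonneg mult.assoc mult_nonneg_nonneg zero_le_numeral)
    then have "norm (\<gamma> l) = \<gamma> l" by simp
    also have "\<dots> \<le> (lam l * az z l) * (4 * Sw + 1 / (1 - norm w))"
      unfolding \<gamma>_def using mult_left_mono[OF az_le[OF w, of l] \<open>0 \<le> lam l * az z l\<close>]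
      by (simp add: algebra_simps)
    finally show "norm (\<gamma> l) \<le> (lam l * az z l) * (4 * Sw + 1 / (1 - norm w))" .
  qed

  define good where "good x \<longleftrightarrow> (summable (\<lambda>l. Z l x * norm z ^ l) \<and> fvar Y z x = (\<Sum>l. of_real (Z l x) * cf z l))
     \<and> (summable (\<lambda>l. Z l x * norm w ^ l) \<and> fvar Y w x = (\<Sum>l. of_real (Z l x) * cf w l))" for x
  have AEgood: "AE x in M. good x"
    using fvar_ae[OF z] fvar_ae[OF w] unfolding good_def by eventually_elim auto

  have Anorm: "norm (A l x) \<le> Z l x * az z l + lam l * az z l" for l x
  proof -
    have "norm (A l x) = \<bar>Z l x - lam l\<bar> * norm (cf z l)" by (simp only: A_def norm_mult norm_of_real)
    also have "\<dots> \<le> (Z l x + lam l) * az z l"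
      by (rule mult_mono) (use Z_nn[of l x] lam_nn[of l] cf_bound[OF z] in auto)
    finally show ?thesis by (simp add: algebra_simps)
  qed
  have Bnorm: "norm (B l x) \<le> Z l x * az w l + lam l * az w l" for l x
  proof -
    have "norm (B l x) = \<bar>Z l x - lam l\<bar> * norm (cf w l)" by (simp only: B_def norm_mult norm_of_real)
    also have "\<dots> \<le> (Z l x + lam l) * az w l"
      by (rule mult_mono) (use Z_nn[of l x] lam_nn[of l] cf_bound[OF w] in auto)
    finally show ?thesis by (simp add: algebra_simps)
  qed

  have good_props: "summable (\<lambda>l. norm (A l x)) \<and> summable (\<lambda>l. norm (B l x)) \<and>
      fvar Y z x - Ez = (\<Sum>l. A l x) \<and> fvar Y w x - Ew = V x \<and>
      (\<forall>l. G l x = A l x * cnj (V x)) \<and> (\<forall>l. summable (\<lambda>m. norm (f l m x))) \<and>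
      summable (\<lambda>l. norm (G l x)) \<and>
      (fvar Y z x - Ez) * cnj (fvar Y w x - Ew) = (\<Sum>l. G l x)" if gx: "good x" for x
  proof -
    from gx have sz: "summable (\<lambda>l. Z l x * norm z ^ l)" and fz: "fvar Y z x = (\<Sum>l. of_real (Z l x) * cf z l)"
      and sw: "summable (\<lambda>l. Z l x * norm w ^ l)" and fw: "fvar Y w x = (\<Sum>l. of_real (Z l x) * cf w l)"
      by (auto simp: good_def)
    have sA: "summable (\<lambda>l. norm (A l x))"
      by (rule summable_comparison_test'[OF summable_add[OF Z_az_summable[OF z sz] lam_az_summable[OF z]]])
         (simp add: Anorm)
    have sB: "summable (\<lambda>l. norm (B l x))"
      by (rule summable_comparison_test'[OF summable_add[OF Z_az_summable[OF w sw] lam_az_summable[OF w]]])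
         (simp add: Bnorm)
    have d1: "(\<lambda>l. of_real (Z l x) * cf z l - of_real (lam l) * cf z l) sums (fvar Y z x - Ez)"
      unfolding fz Ez_def
      by (rule sums_diff[OF summable_sums[OF summable_norm_cancel[OF Zc_summable[OF z sz]]]
                             summable_sums[OF summable_norm_cancel[OF lamc_summable[OF z]]]])
    have d2: "(\<lambda>l. of_real (Z l x) * cf w l - of_real (lam l) * cf w l) sums (fvar Y w x - Ew)"
      unfolding fw Ew_def
      by (rule sums_diff[OF summable_sums[OF summable_norm_cancel[OF Zc_summable[OF w sw]]]
                             summable_sums[OF summable_norm_cancel[OF lamc_summable[OF w]]]])
    have eA: "fvar Y z x - Ez = (\<Sum>l. A l x)"
      using d1 by (simp add: A_def sums_iff algebra_simps)
    have eB: "fvar Y w x - Ew = V x"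
      using d2 by (simp add: B_def V_def sums_iff algebra_simps)
    have cVs: "(\<lambda>m. cnj (B m x)) sums cnj (V x)"
      unfolding V_def sums_cnj using summable_norm_cancel[OF sB] by (rule summable_sums)
    then have cV: "cnj (V x) = (\<Sum>m. cnj (B m x))" by (simp add: sums_iff)
    have scB: "summable (\<lambda>m. cnj (B m x))"
      using summable_norm_cancel[OF sB] summable_sums sums_cnj sums_summable by blast
    have eG: "G l x = A l x * cnj (V x)" for l
      unfolding G_def f_def cV by (rule suminf_mult[OF scB])
    have sf: "summable (\<lambda>m. norm (f l m x))" for l
      unfolding f_def norm_mult complex_mod_cnj by (rule summable_mult[OF sB])
    have sG: "summable (\<lambda>l. norm (G l x))"
      unfolding eG norm_mult by (rule summable_mult2[OF sA])
    have "(fvar Y z x - Ez) * cnj (fvar Y w x - Ew) = (\<Sum>l. A l x) * cnj (V x)" unfolding eA eB ..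
    also have "\<dots> = (\<Sum>l. A l x * cnj (V x))" by (rule suminf_mult2[OF summable_norm_cancel[OF sA]])
    also have "\<dots> = (\<Sum>l. G l x)" by (simp add: eG)
    finally show ?thesis using sA sB eA eB eG sf sG by blast
  qed

  have Gl: "integrable M (G l) \<and> integral\<^sup>L M (G l) = T l \<and> (\<integral>x. norm (G l x) \<partial>M) \<le> \<gamma> l" for l
  proof -
    have s1: "AE x in M. summable (\<lambda>m. norm (f l m x))"
      using AEgood by eventually_elim (use good_props in blast)
    have s2: "summable (\<lambda>m. \<integral>x. norm (f l m x) \<partial>M)"
      by (rule summable_comparison_test'[OF sums_summable[OF sbeta[of l]]]) (simp add: nfb)
    note r = integral_suminf_bound[OF intf s1 s2]
    have "integral\<^sup>L M (G l) = (\<Sum>m. integral\<^sup>L M (f l m))"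
      unfolding G_def[abs_def] by (rule r(2))
    also have "\<dots> = T l" unfolding Ef using sums_single[of l "\<lambda>_. T l"] by (simp add: sums_iff)
    finally have e: "integral\<^sup>L M (G l) = T l" .
    have "(\<integral>x. norm (G l x) \<partial>M) \<le> (\<Sum>m. \<integral>x. norm (f l m x) \<partial>M)"
      unfolding G_def by (rule r(3))
    also have "\<dots> \<le> (\<Sum>m. \<beta> l m)"
      by (rule suminf_le[OF nfb s2 sums_summable[OF sbeta[of l]]])
    also have "\<dots> = \<gamma> l" using sbeta[of l] by (simp add: sums_iff)
    finally show ?thesis using r(1) e unfolding G_def[abs_def] by blast
  qed

  have s1: "AE x in M. summable (\<lambda>l. norm (G l x))"
    using AEgood by eventually_elim (use good_props in blast)
  have s2: "summable (\<lambda>l. \<integral>x. norm (G l x) \<partial>M)"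
    by (rule summable_comparison_test'[OF sgamma]) (use Gl in auto)
  have intG: "\<And>l. integrable M (G l)" using Gl by blast
  note r = integral_suminf_bound[OF intG s1 s2]

  have EZ: "integral\<^sup>L M (fvar Y z) = Ez" using fvar_expect(2)[OF z] by (simp add: Ez_def)
  have EW: "integral\<^sup>L M (fvar Y w) = Ew" using fvar_expect(2)[OF w] by (simp add: Ew_def)
  have "ccov M (fvar Y z) (fvar Y w) = (\<integral>x. (fvar Y z x - Ez) * cnj (fvar Y w x - Ew) \<partial>M)"
    unfolding ccov_def EZ EW ..
  also have "\<dots> = (\<integral>x. (\<Sum>l. G l x) \<partial>M)"
    by (rule integral_cong_AE) (use AEgood good_props in \<open>auto elim!: eventually_mono\<close>)
  also have "\<dots> = (\<Sum>l. integral\<^sup>L M (G l))" by (rule r(2))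
  also have "\<dots> = (\<Sum>l. T l)" using Gl by simp
  finally show ?thesis by (simp add: T_def)
qed

end

lemma conv_radius_of_real_eq: "conv_radius (\<lambda>k. complex_of_real (f k)) = conv_radius f"
  by (simp add: conv_radius_def)

lemma pow_eq: "(of_real r * z ^ a * cnj w ^ b) ^ l = of_real (r ^ l) * z ^ (l * a) * cnj w ^ (l * b)"
  by (simp add: power_mult_distrib power_mult[symmetric] mult.commute)

context setting begin

lemma gfun_has_sum:
  assumes u: "norm u < r"
  shows "((\<lambda>l. of_real (\<theta> l / real l) * u ^ l) has_sum gfun \<theta> u) {1..}"
proof -
  have "ereal (norm u) < conv_radius (\<lambda>k. complex_of_real (\<theta> k / real k))"
    using u cr unfolding conv_radius_of_real_eq by simp
  from abs_summable_in_conv_radius[OF this]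
  have s: "summable (\<lambda>l. norm (of_real (\<theta> l / real l) * u ^ l))" .
  have "((\<lambda>l. of_real (\<theta> l / real l) * u ^ l) has_sum gfun \<theta> u) UNIV"
    by (rule norm_summable_imp_has_sum[OF s])
       (use summable_norm_cancel[OF s] in \<open>simp add: gfun_def summable_sums\<close>)
  then show ?thesis
    by (subst has_sum_cong_neutral[where T = UNIV and g = "\<lambda>l. of_real (\<theta> l / real l) * u ^ l"])
       (auto simp: not_le)
qed

lemma triple:
  assumes z: "norm z < 1" and w: "norm w < 1"
  shows "((\<lambda>(a, b). gfun \<theta> (of_real r * z ^ a * cnj w ^ b) / of_nat (a * b))
            has_sum (\<Sum>l. of_real (lam l) * cf z l * cnj (cf w l))) ({1..} \<times> {1..})"
proof -
  define H where "H = (\<lambda>(l, a, b). of_real (lam l) * ((z ^ (l * a) / of_nat a) * (cnj w ^ (l * b) / of_nat b)) :: complex)"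
  define rz where "rz = norm z"
  define rw where "rw = norm w"
  have rz: "0 \<le> rz" "rz < 1" and rw: "0 \<le> rw" "rw < 1" using z w by (auto simp: rz_def rw_def)
  have inner: "((\<lambda>p. H (l, p)) has_sum (of_real (lam l) * (cc l z * cnj (cc l w)))) ({1..} \<times> {1..})"
    if l: "l \<in> {1..}" for l
  proof -
    have g1: "((\<lambda>b. cnj w ^ (l * b) / of_nat b) has_sum cnj (cc l w)) {1..}"
      using cc_props(2)[of l w] l w has_sum_cnj_iff[of "\<lambda>b. w ^ (l * b) / of_nat b"] by simp
    have g2: "(\<lambda>b. norm (cnj w ^ (l * b) / of_nat b)) summable_on {1..}"
      using cc_props(1)[of l w] l w by (simp add: norm_divide norm_power)
    have "((\<lambda>(a, b). (z ^ (l * a) / of_nat a) * (cnj w ^ (l * b) / of_nat b)) has_sum (cc l z * cnj (cc l w))) ({1..} \<times> {1..})"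
      by (rule has_sum_prod_abs(1)[OF cc_props(2) g1 cc_props(1) g2]) (use l z in auto)
    from has_sum_cmult_right[OF this, of "of_real (lam l)"]
    show ?thesis by (simp add: H_def case_prod_unfold)
  qed
  have innern: "((\<lambda>p. norm (H (l, p))) has_sum (lam l * (Cn l rz * Cn l rw))) ({1..} \<times> {1..})"
    if l: "l \<in> {1..}" for l
  proof -
    have s1: "((\<lambda>a. rz ^ (l * a) / real a) has_sum Cn l rz) {1..}"
      using Cn_props(1)[of l rz] l rz unfolding Cn_def by (simp add: has_sum_iff)
    have s2: "((\<lambda>a. rw ^ (l * a) / real a) has_sum Cn l rw) {1..}"
      using Cn_props(1)[of l rw] l rw unfolding Cn_def by (simp add: has_sum_iff)
    have n1: "(\<lambda>a. norm (rz ^ (l * a) / real a)) summable_on {1..}"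
      using Cn_props(1)[of l rz] l rz by simp
    have n2: "(\<lambda>a. norm (rw ^ (l * a) / real a)) summable_on {1..}"
      using Cn_props(1)[of l rw] l rw by simp
    from has_sum_cmult_right[OF has_sum_prod_abs(1)[OF s1 s2 n1 n2], of "lam l"]
    show ?thesis using lam_nn[of l]
      by (simp add: H_def case_prod_unfold norm_mult norm_divide norm_power rz_def rw_def)
  qed
  have outer: "(\<lambda>l. lam l * (Cn l rz * Cn l rw)) summable_on {1..}"
  proof (rule summable_on_comparison_test)
    show "(\<lambda>l. lam l * az z l * (1 / (1 - rw))) summable_on {1..}"
      by (rule summable_on_from_summable_real[OF summable_mult2[OF lam_az_summable[OF z]]])
         (use lam_nn az_nn[OF z] rw in auto)
    fix l :: nat assume l: "l \<in> {1..}"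
    have c1: "0 \<le> Cn l rz" "Cn l rz \<le> az z l"
      using Cn_props(2,3)[of l rz] l rz by (auto simp: az_def rz_def)
    have c2: "0 \<le> Cn l rw" "Cn l rw \<le> 1 / (1 - rw)"
      using Cn_props(2,3)[of l rw] l rw order.trans[OF _ divide_right_mono[OF power_le_one[OF rw(1) less_imp_le[OF rw(2)]], of "1 - rw"]]
      by auto
    have cc12: "Cn l rz * Cn l rw \<le> az z l * (1 / (1 - rw))"
      by (rule mult_mono) (use c1 c2 az_nn[OF z] in auto)
    show "lam l * (Cn l rz * Cn l rw) \<le> lam l * az z l * (1 / (1 - rw))"
      using mult_left_mono[OF cc12 lam_nn[of l]] by (simp only: mult.assoc)
    show "0 \<le> lam l * (Cn l rz * Cn l rw)" using c1 c2 lam_nn[of l] by simp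
  qed
  have "(\<lambda>p. norm (H p)) summable_on Sigma {1..} (\<lambda>_. {1..} \<times> {1..})"
    by (rule summable_on_SigmaI[OF innern outer]) auto
  then have "H summable_on {1..} \<times> ({1..} \<times> {1..})"
    by (simp add: summable_on_iff_abs_summable_on_complex)
  then obtain S where S: "(H has_sum S) ({1..} \<times> ({1..} \<times> {1..}))"
    by (auto simp: summable_on_def)
  have "((\<lambda>l. of_real (lam l) * (cc l z * cnj (cc l w))) has_sum S) {1..}"
    by (rule has_sum_SigmaD[OF S inner]) auto
  then have "(\<lambda>l. of_real (lam l) * (cc l z * cnj (cc l w))) sums S"
    by (rule has_sum_from1_imp_sums) simp
  moreover have "of_real (lam l) * (cc l z * cnj (cc l w)) = of_real (lam l) * cf z l * cnj (cf w l)" for l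
    by (cases "l = 0") (auto simp: cf_def)
  ultimately have Seq: "(\<Sum>l. of_real (lam l) * cf z l * cnj (cf w l)) = S"
    by (simp add: sums_iff)
  from S have S': "((\<lambda>(p, l). H (l, p)) has_sum S) (({1..} \<times> {1..}) \<times> {1..})"
    by (subst (asm) has_sum_swap) simp
  have inner2: "((\<lambda>l. (\<lambda>(p, l). H (l, p)) (p, l)) has_sum
      (\<lambda>(a, b). gfun \<theta> (of_real r * z ^ a * cnj w ^ b) / of_nat (a * b)) p) {1..}"
    if p: "p \<in> {1..} \<times> {1..}" for p
  proof -
    obtain a b where ab: "p = (a, b)" "a \<ge> 1" "b \<ge> 1" using p by auto
    define u where "u = of_real r * z ^ a * cnj w ^ b"
    have "norm z ^ a * norm w ^ b < 1"
    proof -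
      have "norm z ^ a < 1" using ab z by (simp add: power_less_one_iff)
      moreover have "norm w ^ b \<le> 1" using w by (simp add: power_le_one)
      moreover have "norm z ^ a * norm w ^ b \<le> norm z ^ a"
        by (rule mult_left_le) (use w in \<open>auto simp: power_le_one\<close>)
      ultimately show ?thesis by linarith
    qed
    then have nu: "norm u < r"
      using rpos by (simp add: u_def norm_mult norm_power abs_of_pos mult.assoc)
    have "((\<lambda>l. of_real (\<theta> l / real l) * u ^ l / of_nat (a * b)) has_sum (gfun \<theta> u / of_nat (a * b))) {1..}"
      by (rule has_sum_divide_const[OF gfun_has_sum[OF nu]])
    moreover have "of_real (\<theta> l / real l) * u ^ l / of_nat (a * b) = H (l, a, b)" for l
      unfolding u_def pow_eq H_def using ab by (simp add: lam_def field_simps)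
    ultimately show ?thesis using ab by (simp add: u_def)
  qed
  have "((\<lambda>(a, b). gfun \<theta> (of_real r * z ^ a * cnj w ^ b) / of_nat (a * b)) has_sum S) ({1..} \<times> {1..})"
    by (rule has_sum_SigmaD[OF S' inner2]) auto
  then show ?thesis unfolding Seq .
qed

end


theorem mainTheorem8:
  fixes M :: "'a measure" and \<theta> :: "nat \<Rightarrow> real" and r :: real
    and Y :: "nat \<Rightarrow> 'a \<Rightarrow> nat" and z w :: complex
  assumes "prob_space M"
    and "\<And>k. k \<ge> 1 \<Longrightarrow> \<theta> k > 0"
    and "0 < r"
    and "conv_radius (\<lambda>k. \<theta> k / real k) = ereal r"
    and "prob_space.indep_vars M (\<lambda>_. count_space UNIV) Y {1..}"
    and "\<And>l. l \<ge> 1 \<Longrightarrow>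
           distr M (count_space UNIV) (Y l) = measure_pmf (poisson_pmf (r ^ l * \<theta> l / real l))"
    and "norm z < 1" and "norm w < 1"
  shows "((\<lambda>(a, b). gfun \<theta> (of_real r * z ^ a * cnj w ^ b) / of_nat (a * b))
            has_sum ccov M (fvar Y z) (fvar Y w)) ({1..} \<times> {1..})"
proof -
  interpret setting M \<theta> r Y
    by (rule setting.intro[OF assms(1-6)])
  show ?thesis unfolding cov_main[OF assms(7,8)] by (rule triple[OF assms(7,8)])
qed

end
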